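(* Let $p$ be a prime, $a,b$ positive integers, $\tau\in\mathbb{Z}$, and $\alpha,\beta\ge0$ integers such that $p^\beta$ exactly divides $\gcd(a,b)$ (i.e. $p^\beta\mid\gcd(a,b)$ but $p^{\beta+1}\nmid\gcd(a,b)$) and $p^\alpha\mid a+b$. Then $p^{\alpha-\beta}$ divides $$\binom{a\tau+a-1}{a}\binom{b\tau+b}{b},$$ i.e. the $p$-adic valuation of this product is at least $\alpha-\beta$.
   Context: For integers $b\geq 0$ and $a\in\mathbb{Z}$ the binomial coefficient is defined by: $\binom{a}{b}=1$ if $b=0$; $\binom{a}{b}$ is the usual binomial coefficient if $b\geq 1$ and $a\geq 0$; and $\binom{a}{b}=(-1)^b\binom{-a+b-1}{b}$ if $b\geq1$ and $a<0$. *)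

theory Defs
  imports "HOL-Computational_Algebra.Primes"
begin

definition gen_binom :: "int \<Rightarrow> nat \<Rightarrow> int" where
  "gen_binom a b =
     (if b = 0 then 1
      else if a \<ge> 0 then int (nat a choose b)
      else (-1) ^ b * int (nat (- a + int b - 1) choose b))"

end

theory Submission
  imports Defs Complex_Main
begin


lemma gen_binom_real: "(of_int (gen_binom x n) :: real) = (of_int x) gchoose n"
proof (cases "n = 0")
  case True thus ?thesis by (simp add: gen_binom_def)
next
  case False
  show ?thesis
  proof (cases "x \<ge> 0")
    case True
    have "(of_int (gen_binom x n) :: real) = of_nat (nat x choose n)"
      using False True by (simp add: gen_binom_def)
    also have "\<dots> = of_nat (nat x) gchoose n" by (rule binomial_gbinomial)
    also have "\<dots> = of_int x gchoose n" using True by simp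
    finally show ?thesis .
  next
    case F: False
    have "(of_int (gen_binom x n) :: real) = (-1)^n * of_nat (nat (- x + int n - 1) choose n)"
      using False F by (simp add: gen_binom_def)
    also have "\<dots> = (-1)^n * (of_nat (nat (- x + int n - 1)) gchoose n)" by (simp add: binomial_gbinomial)
    also have "of_nat (nat (- x + int n - 1)) = (of_nat n - of_int x - 1 :: real)" using F by simp
    also have "(-1)^n * ((of_nat n - of_int x - 1 :: real) gchoose n) = of_int x gchoose n"
      by (rule gbinomial_negated_upper[symmetric])
    finally show ?thesis .
  qed
qed

lemma gen_binom_prod: "int (fact n) * gen_binom x n = (\<Prod>i<n. x - int i)"
proof -
  have "(of_int (int (fact n) * gen_binom x n) :: real) = fact n * (of_int x gchoose n)"
    by (simp add: gen_binom_real)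
  also have "\<dots> = (\<Prod>i = 0..<n. of_int x - of_nat i)" by (rule gbinomial_mult_fact)
  also have "\<dots> = of_int (\<Prod>i<n. x - int i)" by (simp add: lessThan_atLeast0)
  finally show ?thesis by (simp only: of_int_eq_iff)
qed

lemma fact_prod: "int (fact n) = (\<Prod>i<n. int n - int i)"
proof -
  have "gen_binom (int n) n = 1" by (simp add: gen_binom_def)
  thus ?thesis using gen_binom_prod[of n "int n"] by simp
qed

lemma div_step: fixes y q :: int assumes "q > 0"
  shows "y div q - (y - 1) div q = (if q dvd y then 1 else 0)"
proof -
  have "y div q = (y - 1) div q + 1 div q + ((y-1) mod q + 1 mod q) div q"
    using div_add1_eq[of "y-1" 1 q] by simp
  show ?thesis
  proof (cases "q = 1")
    case True thus ?thesis by simp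
  next
    case False
    hence q2: "q \<ge> 2" using assms by linarith
    have e: "y div q = (y - 1) div q + ((y-1) mod q + 1) div q"
      using div_add1_eq[of "y-1" 1 q] q2 by simp
    have m: "0 \<le> (y-1) mod q" "(y-1) mod q < q" using assms by auto
    show ?thesis
    proof (cases "q dvd y")
      case True
      hence "y mod q = 0" by simp
      hence "(y - 1) mod q = q - 1"
        by (metis assms mod_diff_left_eq zmod_minus1 diff_0)
      thus ?thesis using e True assms by simp
    next
      case F: False
      have "(y-1) mod q + 1 \<noteq> q"
      proof
        assume h: "(y-1) mod q + 1 = q"
        have "y mod q = ((y-1) mod q + 1) mod q" by (simp add: mod_add_left_eq)
        hence "y mod q = 0" using h by simp
        thus False using F by auto
      qed
      hence "((y-1) mod q + 1) div q = 0" using m by (intro div_pos_pos_trivial) auto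
      thus ?thesis using e F by simp
    qed
  qed
qed

lemma count_mult: fixes q m :: int assumes "q > 0"
  shows "int (card {i \<in> {..<n}. q dvd m - int i}) = m div q - (m - int n) div q"
proof (induction n)
  case 0 thus ?case by simp
next
  case (Suc n)
  have "{i \<in> {..<Suc n}. q dvd m - int i} =
        (if q dvd m - int n then insert n {i \<in> {..<n}. q dvd m - int i} else {i \<in> {..<n}. q dvd m - int i})"
    by (auto simp: less_Suc_eq)
  hence "int (card {i \<in> {..<Suc n}. q dvd m - int i}) =
         int (card {i \<in> {..<n}. q dvd m - int i}) + (if q dvd m - int n then 1 else 0)"
    by auto
  also have "\<dots> = m div q - (m - int n) div q + ((m - int n) div q - (m - int n - 1) div q)"
    using Suc div_step[OF assms, of "m - int n"] by simp
  finally have h: "int (card {i \<in> {..<Suc n}. q dvd m - int i}) = m div q - (m - int n - 1) div q" by simp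
  have "m - int (Suc n) = m - int n - 1" by simp
  thus ?case using h by metis
qed



lemma two_q: fixes u q :: int assumes "q > 0" "0 \<le> u" "u < 2*q" "q dvd u" shows "u = 0 \<or> u = q"
proof -
  obtain k where k: "u = q*k" using assms by (auto elim: dvdE)
  have "k \<ge> 0" using assms k zero_le_mult_iff[of q k] by linarith
  moreover have "q * k < q * 2" using assms k by (simp add: mult.commute)
  hence "k < 2" using assms(1) mult_less_cancel_left_pos[of q k 2] by blast
  ultimately have "k = 0 \<or> k = 1" by auto
  thus ?thesis using k by auto
qed

lemma ge1_div: fixes u q :: int assumes "q > 0" "q \<le> u" shows "u div q \<ge> 1"
proof -
  have "q div q \<le> u div q" by (rule zdiv_mono1) (use assms in auto)
  thus ?thesis using assms by simp
qed

lemma carry: fixes q a b X Y :: int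
  assumes q: "q > 0" and ab: "q dvd a + b" and na: "\<not> q dvd a" and XY: "q dvd X + Y"
  shows "((X-1) mod q + a mod q) div q + (Y mod q + b mod q) div q \<ge> 1"
proof -
  define r where "r = a mod q"
  define s where "s = X mod q"
  have r0: "0 < r" "r < q" using q na unfolding r_def
    by (auto simp: dvd_eq_mod_eq_0 order.not_eq_order_implies_strict)
  have "q dvd r + b mod q" using ab unfolding r_def
    by (simp add: dvd_eq_mod_eq_0 mod_add_eq)
  hence rb: "r + b mod q = q" using two_q[of q "r + b mod q"] q r0
    by (smt (verit) pos_mod_bound pos_mod_sign)
  have "q dvd s + Y mod q" using XY unfolding s_def
    by (simp add: dvd_eq_mod_eq_0 mod_add_eq)
  hence sY: "s + Y mod q = 0 \<or> s + Y mod q = q" using two_q[of q "s + Y mod q"] q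
    by (smt (verit) pos_mod_bound pos_mod_sign s_def)
  have s0: "0 \<le> s" "s < q" using q unfolding s_def by auto
  have X1: "(X - 1) mod q = (s - 1) mod q" unfolding s_def by (simp add: mod_diff_left_eq)
  show ?thesis
  proof (cases "s = 0")
    case True
    have "(s - 1) mod q = q - 1" using True q by (simp add: zmod_minus1)
    hence "((X-1) mod q + a mod q) div q \<ge> 1" using X1 r0 q r_def by (intro ge1_div) auto
    moreover have "(Y mod q + b mod q) div q \<ge> 0" using q by (simp add: pos_imp_zdiv_nonneg_iff)
    ultimately show ?thesis by linarith
  next
    case False
    have sm: "(s - 1) mod q = s - 1" using False s0 by simp
    show ?thesis
    proof (cases "s + r \<le> q")
      case True
      have Ym: "0 \<le> Y mod q" using q by simp
      have "s + Y mod q \<noteq> 0" using False s0 Ym by linarith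
      hence "s + Y mod q = q" using sY by blast
      hence "Y mod q = q - s" by linarith
      hence "(Y mod q + b mod q) div q \<ge> 1" using rb True q by (intro ge1_div) auto
      moreover have "((X-1) mod q + a mod q) div q \<ge> 0" using q by (simp add: pos_imp_zdiv_nonneg_iff)
      ultimately show ?thesis by linarith
    next
      case F: False
      hence "((X-1) mod q + a mod q) div q \<ge> 1" using X1 sm r_def q by (intro ge1_div) auto
      moreover have "(Y mod q + b mod q) div q \<ge> 0" using q by (simp add: pos_imp_zdiv_nonneg_iff)
      ultimately show ?thesis by linarith
    qed
  qed
qed





lemma card_sum_ind: "finite A \<Longrightarrow> card {x \<in> A. P x} = (\<Sum>x\<in>A. if P x then 1 else 0)"
  by (simp add: sum.inter_filter[symmetric])

lemma mult_le_abs: fixes p x :: int assumes "prime p" "x \<noteq> 0"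
  shows "multiplicity p x \<le> nat \<bar>x\<bar>"
proof -
  define v where "v = multiplicity p x"
  have "p ^ v dvd x" unfolding v_def by (rule multiplicity_dvd)
  hence "\<bar>p ^ v\<bar> \<le> \<bar>x\<bar>" using assms(2) by (rule dvd_imp_le_int[rotated])
  moreover have "p \<ge> 2" using assms(1) by (rule prime_ge_2_int)
  hence "(2::int) ^ v \<le> p ^ v" by (intro power_mono) auto
  moreover have "int v < 2 ^ v"
  proof -
    have "int v < int (2 ^ v)" by (simp only: of_nat_less_iff) (rule less_exp)
    thus ?thesis by simp
  qed
  moreover have "\<bar>p ^ v\<bar> = p ^ v" using \<open>p \<ge> 2\<close> by simp
  ultimately have "int v < \<bar>x\<bar>" by linarith
  thus ?thesis unfolding v_def by linarith
qed

lemma mult_count: fixes p x :: int assumes "prime p" "x \<noteq> 0" "multiplicity p x \<le> M"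
  shows "multiplicity p x = card {j \<in> {1..M}. p ^ j dvd x}"
proof -
  have nu: "\<not> is_unit p" using assms(1) not_prime_unit by blast
  have "{j \<in> {1..M}. p ^ j dvd x} = {j \<in> {1..M}. j \<le> multiplicity p x}"
    using power_dvd_iff_le_multiplicity[OF assms(2) nu] by blast
  also have "\<dots> = {1..multiplicity p x}" using assms(3) by auto
  finally have e: "{j \<in> {1..M}. p ^ j dvd x} = {1..multiplicity p x}" .
  show ?thesis unfolding e by simp
qed

lemma mult_prod: fixes p m :: int assumes p: "prime p" and nz: "(\<Prod>i<n. m - int i) \<noteq> 0"
  and M: "\<bar>m\<bar> + int n \<le> int M"
  shows "int (multiplicity p (\<Prod>i<n. m - int i)) = (\<Sum>j\<in>{1..M}. m div p^j - (m - int n) div p^j)"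
proof -
  have nz': "\<And>i. i < n \<Longrightarrow> m - int i \<noteq> 0" using nz by auto
  have "multiplicity p (\<Prod>i<n. m - int i) = (\<Sum>i<n. multiplicity p (m - int i))"
    using prime_imp_prime_elem[OF p] nz' by (intro prime_elem_multiplicity_prod_distrib) auto
  also have "\<dots> = (\<Sum>i<n. card {j \<in> {1..M}. p ^ j dvd m - int i})"
  proof (intro sum.cong refl)
    fix i assume "i \<in> {..<n}"
    hence i: "i < n" by simp
    have "multiplicity p (m - int i) \<le> nat \<bar>m - int i\<bar>" using mult_le_abs[OF p nz'[OF i]] .
    also have "\<dots> \<le> M" using M i by linarith
    finally show "multiplicity p (m - int i) = card {j \<in> {1..M}. p ^ j dvd m - int i}"
      using mult_count[OF p nz'[OF i]] by blast
  qed
  also have "\<dots> = (\<Sum>i<n. \<Sum>j\<in>{1..M}. if p ^ j dvd m - int i then 1 else 0)"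
    by (intro sum.cong refl card_sum_ind) simp
  also have "\<dots> = (\<Sum>j\<in>{1..M}. \<Sum>i<n. if p ^ j dvd m - int i then 1 else 0)"
    by (rule sum.swap)
  also have "\<dots> = (\<Sum>j\<in>{1..M}. card {i \<in> {..<n}. p ^ j dvd m - int i})"
    by (intro sum.cong refl card_sum_ind[symmetric]) simp
  finally have "int (multiplicity p (\<Prod>i<n. m - int i)) = (\<Sum>j\<in>{1..M}. int (card {i \<in> {..<n}. p ^ j dvd m - int i}))"
    by simp
  also have "\<dots> = (\<Sum>j\<in>{1..M}. m div p^j - (m - int n) div p^j)"
  proof (intro sum.cong refl)
    fix j :: nat
    have "p ^ j > 0" using prime_gt_0_int[OF p] by simp
    thus "int (card {i \<in> {..<n}. p ^ j dvd m - int i}) = m div p^j - (m - int n) div p^j"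
      by (rule count_mult)
  qed
  finally show ?thesis .
qed


lemma D_form: fixes Q X a :: int
  shows "(X + a - 1) div Q - (X - 1) div Q - a div Q = ((X - 1) mod Q + a mod Q) div Q"
proof -
  have e: "X + a - 1 = (X - 1) + a" by simp
  show ?thesis by (subst e) (use div_add1_eq[of "X - 1" a Q] in linarith)
qed

lemma D_form2: fixes Q Y b :: int
  shows "(Y + b) div Q - Y div Q - b div Q = (Y mod Q + b mod Q) div Q"
  using div_add1_eq[of Y b Q] by simp

theorem lemma4p1:
  fixes p :: nat and a b \<tau> :: int and \<alpha> \<beta> :: nat
  assumes "prime p" and "a > 0" and "b > 0"
    and "(int p) ^ \<beta> dvd gcd a b" and "\<not> (int p) ^ (\<beta> + 1) dvd gcd a b"
    and "(int p) ^ \<alpha> dvd a + b"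
  shows "(int p) ^ (\<alpha> - \<beta>) dvd
           gen_binom (a * \<tau> + a - 1) (nat a) * gen_binom (b * \<tau> + b) (nat b)"
proof -
  define q where "q = int p"
  have pq: "prime q" using assms(1) by (simp add: q_def)
  have q0: "q > 0" using pq by (rule prime_gt_0_int)
  have pe: "prime_elem q" using pq by (rule prime_imp_prime_elem)
  define A where "A = gen_binom (a * \<tau> + a - 1) (nat a)"
  define B where "B = gen_binom (b * \<tau> + b) (nat b)"
  have goal: "q ^ (\<alpha> - \<beta>) dvd A * B"
  proof (cases "A * B = 0")
    case True thus ?thesis by (metis dvd_0_right)
  next
    case False
    hence A0: "A \<noteq> 0" and B0: "B \<noteq> 0" by auto
    define na where "na = nat a"
    define nb where "nb = nat b"
    have ia: "int na = a" using assms(2) by (simp add: na_def)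
    have ib: "int nb = b" using assms(3) by (simp add: nb_def)
    define m1 where "m1 = a * \<tau> + a - 1"
    define m2 where "m2 = b * \<tau> + b"
    have P1: "int (fact na) * A = (\<Prod>i<na. m1 - int i)"
      unfolding A_def m1_def na_def by (rule gen_binom_prod)
    have P2: "int (fact nb) * B = (\<Prod>i<nb. m2 - int i)"
      unfolding B_def m2_def nb_def by (rule gen_binom_prod)
    have F1: "int (fact na) = (\<Prod>i<na. int na - int i)" by (rule fact_prod)
    have F2: "int (fact nb) = (\<Prod>i<nb. int nb - int i)" by (rule fact_prod)
    have f1: "int (fact na) \<noteq> 0" and f2: "int (fact nb) \<noteq> 0" by auto
    define M where "M = nat (\<bar>m1\<bar> + \<bar>m2\<bar>) + 2 * na + 2 * nb + \<alpha> + 1"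
    have M1: "\<bar>m1\<bar> + int na \<le> int M" unfolding M_def by linarith
    have M2: "\<bar>m2\<bar> + int nb \<le> int M" unfolding M_def by linarith
    have M3: "\<bar>int na\<bar> + int na \<le> int M" unfolding M_def by linarith
    have M4: "\<bar>int nb\<bar> + int nb \<le> int M" unfolding M_def by linarith
    have M5: "\<alpha> \<le> M" unfolding M_def by linarith
    have v1: "int (multiplicity q (\<Prod>i<na. m1 - int i)) = (\<Sum>j\<in>{1..M}. m1 div q^j - (m1 - int na) div q^j)"
      using P1 f1 A0 by (intro mult_prod[OF pq _ M1]) (metis mult_eq_0_iff)
    have v2: "int (multiplicity q (\<Prod>i<nb. m2 - int i)) = (\<Sum>j\<in>{1..M}. m2 div q^j - (m2 - int nb) div q^j)"
      using P2 f2 B0 by (intro mult_prod[OF pq _ M2]) (metis mult_eq_0_iff)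
    have v3: "int (multiplicity q (\<Prod>i<na. int na - int i)) = (\<Sum>j\<in>{1..M}. int na div q^j - (int na - int na) div q^j)"
      using F1 f1 by (intro mult_prod[OF pq _ M3]) simp
    have v4: "int (multiplicity q (\<Prod>i<nb. int nb - int i)) = (\<Sum>j\<in>{1..M}. int nb div q^j - (int nb - int nb) div q^j)"
      using F2 f2 by (intro mult_prod[OF pq _ M4]) simp
    have e1: "multiplicity q (\<Prod>i<na. m1 - int i) = multiplicity q (\<Prod>i<na. int na - int i) + multiplicity q A"
      using P1 F1 prime_elem_multiplicity_mult_distrib[OF pe f1 A0] by simp
    have e2: "multiplicity q (\<Prod>i<nb. m2 - int i) = multiplicity q (\<Prod>i<nb. int nb - int i) + multiplicity q B"
      using P2 F2 prime_elem_multiplicity_mult_distrib[OF pe f2 B0] by simp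
    define D where "D j = ((a * \<tau> - 1) mod q^j + a mod q^j) div q^j + ((b * \<tau>) mod q^j + b mod q^j) div q^j" for j
    have Dj: "(m1 div q^j - (m1 - int na) div q^j) + (m2 div q^j - (m2 - int nb) div q^j)
              - (int na div q^j - (int na - int na) div q^j) - (int nb div q^j - (int nb - int nb) div q^j) = D j" for j
    proof -
      have "m1 div q^j - (m1 - int na) div q^j - int na div q^j = ((a * \<tau> - 1) mod q^j + a mod q^j) div q^j"
        using D_form[of "a * \<tau>" a "q^j"] ia unfolding m1_def by simp
      moreover have "m2 div q^j - (m2 - int nb) div q^j - int nb div q^j = ((b * \<tau>) mod q^j + b mod q^j) div q^j"
        using D_form2[of "b * \<tau>" b "q^j"] ib unfolding m2_def by simp
      ultimately show ?thesis unfolding D_def by simp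
    qed
    have sumD: "int (multiplicity q A) + int (multiplicity q B) = (\<Sum>j\<in>{1..M}. D j)"
    proof -
      have "int (multiplicity q A) + int (multiplicity q B) =
        (\<Sum>j\<in>{1..M}. m1 div q^j - (m1 - int na) div q^j) + (\<Sum>j\<in>{1..M}. m2 div q^j - (m2 - int nb) div q^j)
        - (\<Sum>j\<in>{1..M}. int na div q^j - (int na - int na) div q^j) - (\<Sum>j\<in>{1..M}. int nb div q^j - (int nb - int nb) div q^j)"
        using v1 v2 v3 v4 e1 e2 by simp
      also have "\<dots> = (\<Sum>j\<in>{1..M}. (m1 div q^j - (m1 - int na) div q^j) + (m2 div q^j - (m2 - int nb) div q^j)
              - (int na div q^j - (int na - int na) div q^j) - (int nb div q^j - (int nb - int nb) div q^j))"
        by (simp only: sum.distrib sum_subtractf)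
      also have "\<dots> = (\<Sum>j\<in>{1..M}. D j)" using Dj by simp
      finally show ?thesis .
    qed
    have Dnn: "D j \<ge> 0" for j
    proof -
      have "q ^ j > 0" using q0 by simp
      thus ?thesis unfolding D_def by (simp add: pos_imp_zdiv_nonneg_iff)
    qed
    have D1: "D j \<ge> 1" if j: "\<beta> < j" "j \<le> \<alpha>" for j
    proof -
      have Qp: "q ^ j > 0" using q0 by simp
      have ab: "q ^ j dvd a + b" using assms(6) j(2) unfolding q_def
        by (meson dvd_trans le_imp_power_dvd)
      have na: "\<not> q ^ j dvd a"
      proof
        assume h: "q ^ j dvd a"
        hence "q ^ j dvd b" using ab by (simp add: dvd_add_right_iff)
        hence "q ^ j dvd gcd a b" using h by simp
        moreover have "q ^ (\<beta> + 1) dvd q ^ j" using j(1) by (intro le_imp_power_dvd) simp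
        ultimately show False using assms(5) unfolding q_def by (meson dvd_trans)
      qed
      have XY: "q ^ j dvd a * \<tau> + b * \<tau>"
        using ab by (simp add: distrib_right[symmetric])
      show ?thesis unfolding D_def by (rule carry[OF Qp ab na XY])
    qed
    have "(\<Sum>j\<in>{\<beta><..\<alpha>}. (1::int)) \<le> (\<Sum>j\<in>{\<beta><..\<alpha>}. D j)"
      using D1 by (intro sum_mono) auto
    also have "\<dots> \<le> (\<Sum>j\<in>{1..M}. D j)"
      using Dnn M5 by (intro sum_mono2) auto
    finally have "int (\<alpha> - \<beta>) \<le> int (multiplicity q A) + int (multiplicity q B)"
      using sumD by simp
    hence "\<alpha> - \<beta> \<le> multiplicity q (A * B)"
      using prime_elem_multiplicity_mult_distrib[OF pe A0 B0] by simp
    thus ?thesis by (rule multiplicity_dvd')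
  qed
  thus ?thesis unfolding q_def A_def B_def .
qed

end
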